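(* On uniform instances with popularity $p=1/2$ on $n+1$ agents, the AVD mechanism, with any choice of default node, has expected additive approximation $\mathbb{E}[\Delta(\mathbf{x})-d_w(\mathbf{x})]=\Omega(\ln n)$, where $w$ is the AVD winner.
   Context: A nomination profile on a finite agent set $N$ is a directed graph $\mathbf{x}$ on $N$ without self-loops. For $S\subseteq N$, $d_j(S,\mathbf{x})=|\{i\in S:(i,j)\text{ is an edge}\}|$; $d_j(\mathbf{x})=d_j(N\setminus\{j\},\mathbf{x})$ and $\Delta(\mathbf{x})=\max_j d_j(\mathbf{x})$. Uniform model with popularity $p$: each directed edge $(i,j)$, $i\ne j$, is present independently with probability $p$. AVD with default node $t$: a non-default node $k$ beats a non-default node $j$ if $d_k(N\setminus\{j,k,t\},\mathbf{x})>d_j(N\setminus\{j,k,t\},\mathbf{x})$; a non-default $k$ beats $t$ if $d_k(N\setminus\{k,t\},\mathbf{x})>d_t(N\setminus\{k,t\},\mathbf{x})$, and $t$ beats $k$ if $d_k(N\setminus\{k,t\},\mathbf{x})<d_t(N\setminus\{k,t\},\mathbf{x})$. AVD returns the node that beats every other node if it exists, otherwise $t$. *)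

theory Defs
  imports "HOL-Probability.Probability"
begin

text \<open>Agents are 0..n (n+1 agents). A profile is a set of directed edges (i,j).\<close>

definition agents :: "nat \<Rightarrow> nat set" where
  "agents n = {..n}"

definition possible_edges :: "nat \<Rightarrow> (nat \<times> nat) set" where
  "possible_edges n = {(i, j). i \<in> agents n \<and> j \<in> agents n \<and> i \<noteq> j}"

definition uniform_model :: "nat \<Rightarrow> real \<Rightarrow> (nat \<times> nat) set pmf" where
  "uniform_model n p =
     map_pmf (\<lambda>f. {e. f e}) (Pi_pmf (possible_edges n) False (\<lambda>_. bernoulli_pmf p))"

definition indeg :: "nat set \<Rightarrow> (nat \<times> nat) set \<Rightarrow> nat \<Rightarrow> nat" where
  "indeg S x j = card {i \<in> S. (i, j) \<in> x}"

definition deg :: "nat \<Rightarrow> (nat \<times> nat) set \<Rightarrow> nat \<Rightarrow> nat" where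
  "deg n x j = indeg (agents n - {j}) x j"

definition max_deg :: "nat \<Rightarrow> (nat \<times> nat) set \<Rightarrow> nat" where
  "max_deg n x = Max (deg n x ` agents n)"

definition avd_beats :: "nat \<Rightarrow> nat \<Rightarrow> (nat \<times> nat) set \<Rightarrow> nat \<Rightarrow> nat \<Rightarrow> bool" where
  "avd_beats n t x k j =
     (if k \<noteq> t \<and> j \<noteq> t then
        indeg (agents n - {j, k, t}) x k > indeg (agents n - {j, k, t}) x j
      else if k \<noteq> t \<and> j = t then
        indeg (agents n - {k, t}) x k > indeg (agents n - {k, t}) x t
      else if k = t \<and> j \<noteq> t then
        indeg (agents n - {j, t}) x j < indeg (agents n - {j, t}) x t
      else False)"

definition avd :: "nat \<Rightarrow> nat \<Rightarrow> (nat \<times> nat) set \<Rightarrow> nat" where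
  "avd n t x =
     (if \<exists>k \<in> agents n. \<forall>j \<in> agents n - {k}. avd_beats n t x k j
      then (THE k. k \<in> agents n \<and> (\<forall>j \<in> agents n - {k}. avd_beats n t x k j))
      else t)"

end

theory Submission
  imports Defs "HOL-Real_Asymp.Real_Asymp"
begin

lemma indeg_le_diff:
  assumes "finite S" "finite S'"
  shows "indeg S x j \<le> indeg S' x j + card (S - S')"
proof -
  have "{i \<in> S. (i, j) \<in> x} \<subseteq> {i \<in> S'. (i, j) \<in> x} \<union> (S - S')" by auto
  hence "card {i \<in> S. (i, j) \<in> x} \<le> card ({i \<in> S'. (i, j) \<in> x} \<union> (S - S'))"
    using assms by (intro card_mono) auto
  also have "\<dots> \<le> card {i \<in> S'. (i, j) \<in> x} + card (S - S')" by (rule card_Un_le)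
  finally show ?thesis unfolding indeg_def .
qed

lemma indeg_mono:
  assumes "S \<subseteq> S'" "finite S'"
  shows "indeg S x j \<le> indeg S' x j"
  unfolding indeg_def using assms by (intro card_mono) auto

lemma finite_agents[simp]: "finite (agents n)" by (simp add: agents_def)
lemma card_agents[simp]: "card (agents n) = Suc n" by (simp add: agents_def)

definition Src :: "nat \<Rightarrow> nat \<Rightarrow> nat \<Rightarrow> nat \<Rightarrow> nat \<Rightarrow> nat set" where
  "Src n t a b v = (if v \<in> {a,b,t} then agents n - {a,b,t} else agents n - {a,b,v})"

definition Xs :: "nat \<Rightarrow> nat \<Rightarrow> nat \<Rightarrow> nat \<Rightarrow> nat \<Rightarrow> nat \<Rightarrow> nat set" where
  "Xs t a b L T v = (if v = a \<or> v = b then {L} else if v = t then {..T} else {..L-5})"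

definition Ev :: "nat \<Rightarrow> nat \<Rightarrow> nat \<Rightarrow> nat \<Rightarrow> nat \<Rightarrow> nat \<Rightarrow> (nat \<times> nat) set set" where
  "Ev n t a b L T = {x. \<forall>v\<in>agents n. indeg (Src n t a b v) x v \<in> Xs t a b L T v}"

definition R :: "nat \<Rightarrow> nat \<Rightarrow> nat \<Rightarrow> nat \<Rightarrow> nat set" where
  "R n t a b = agents n - {a,b,t}"

context
  fixes n t a b L T x
  assumes ag: "t \<in> agents n" "a \<in> agents n" "b \<in> agents n" "a \<noteq> b" "a \<noteq> t" "b \<noteq> t"
      and L5: "L \<ge> 5" and xE: "x \<in> Ev n t a b L T"
begin


lemma ia: "indeg (R n t a b) x a = L" using xE ag unfolding Ev_def Src_def Xs_def R_def by auto
lemma ib: "indeg (R n t a b) x b = L" using xE ag unfolding Ev_def Src_def Xs_def R_def by force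
lemma it: "indeg (R n t a b) x t \<le> T" using xE ag unfolding Ev_def Src_def Xs_def R_def by force
lemma ik: "k \<in> R n t a b \<Longrightarrow> indeg (agents n - {a,b,k}) x k \<le> L - 5"
proof -
  assume k: "k \<in> R n t a b"
  hence "k \<in> agents n" "k \<notin> {a,b,t}" by (auto simp: R_def)
  moreover have "indeg (Src n t a b k) x k \<in> Xs t a b L T k" using xE \<open>k \<in> agents n\<close> by (auto simp: Ev_def)
  ultimately show ?thesis by (auto simp: Src_def Xs_def)
qed

lemma deg_t: "deg n x t \<le> T + 2"
proof -
  have "deg n x t \<le> indeg (R n t a b) x t + card ((agents n - {t}) - (R n t a b))"
    unfolding deg_def by (rule indeg_le_diff) (auto simp: R_def)
  also have "card ((agents n - {t}) - (R n t a b)) \<le> card {a,b}"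
    by (rule card_mono) (auto simp: R_def)
  also have "card {a,b} \<le> 2" by (simp add: card_insert_if)
  finally show ?thesis using it by linarith
qed

lemma deg_a: "deg n x a \<ge> L"
proof -
  have "indeg (R n t a b) x a \<le> deg n x a" unfolding deg_def by (rule indeg_mono) (auto simp: R_def)
  thus ?thesis using ia by simp
qed

lemma deg_b: "deg n x b \<ge> L"
proof -
  have "indeg (R n t a b) x b \<le> deg n x b" unfolding deg_def by (rule indeg_mono) (auto simp: R_def)
  thus ?thesis using ib by simp
qed

lemma deg_k: "k \<in> R n t a b \<Longrightarrow> deg n x k + 3 \<le> L"
proof -
  assume k: "k \<in> R n t a b"
  have "deg n x k \<le> indeg (agents n - {a,b,k}) x k + card ((agents n - {k}) - (agents n - {a,b,k}))"
    unfolding deg_def by (rule indeg_le_diff) auto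
  also have "card ((agents n - {k}) - (agents n - {a,b,k})) \<le> card {a,b}"
    by (rule card_mono) auto
  also have "card {a,b} \<le> 2" by (simp add: card_insert_if)
  finally show ?thesis using ik[OF k] L5 by linarith
qed

lemma max_ge: "max_deg n x \<ge> L"
proof -
  have "deg n x a \<le> max_deg n x" unfolding max_deg_def using ag by (intro Max_ge) auto
  thus ?thesis using deg_a by simp
qed

lemma not_win: "k \<in> agents n \<Longrightarrow> k \<noteq> t \<Longrightarrow> \<exists>j \<in> agents n - {k}. \<not> avd_beats n t x k j"
proof -
  assume k: "k \<in> agents n" "k \<noteq> t"
  consider "k = a" | "k = b" | "k \<in> R n t a b" using k by (auto simp: R_def)
  thus ?thesis
  proof cases
    case 1
    have "agents n - {b, a, t} = R n t a b" by (auto simp: R_def)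
    hence "\<not> avd_beats n t x k b" using 1 ag ia ib by (simp add: avd_beats_def)
    thus ?thesis using 1 ag by auto
  next
    case 2
    have "agents n - {a, b, t} = R n t a b" by (auto simp: R_def)
    hence "\<not> avd_beats n t x k a" using 2 ag ia ib by (simp add: avd_beats_def)
    thus ?thesis using 2 ag by auto
  next
    case 3
    have ka: "k \<noteq> a" "k \<noteq> b" using 3 by (auto simp: R_def)
    have "indeg (agents n - {a,k,t}) x k \<le> indeg (agents n - {a,b,k}) x k + card ((agents n - {a,k,t}) - (agents n - {a,b,k}))"
      by (rule indeg_le_diff) auto
    also have "card ((agents n - {a,k,t}) - (agents n - {a,b,k})) \<le> card {b}"
      by (rule card_mono) auto
    finally have h1: "indeg (agents n - {a,k,t}) x k \<le> L - 4" using ik[OF 3] L5 by simp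
    have "indeg (R n t a b) x a \<le> indeg (agents n - {a,k,t}) x a + card ((R n t a b) - (agents n - {a,k,t}))"
      by (rule indeg_le_diff) (auto simp: R_def)
    also have "card ((R n t a b) - (agents n - {a,k,t})) \<le> card {k}"
      by (rule card_mono) (auto simp: R_def)
    finally have h2: "L \<le> indeg (agents n - {a,k,t}) x a + 1" using ia by simp
    have "\<not> avd_beats n t x k a" using h1 h2 ka k ag L5 by (simp add: avd_beats_def)
    thus ?thesis using ka ag by auto
  qed
qed

lemma avd_t: "avd n t x = t"
proof (cases "\<exists>k \<in> agents n. \<forall>j \<in> agents n - {k}. avd_beats n t x k j")
  case True
  then obtain k where k: "k \<in> agents n" "\<forall>j \<in> agents n - {k}. avd_beats n t x k j" by blast
  have kt: "k = t" using not_win k by blast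
  have "(THE k. k \<in> agents n \<and> (\<forall>j \<in> agents n - {k}. avd_beats n t x k j)) = t"
    by (rule the_equality) (use k kt not_win in blast)+
  thus ?thesis using True by (simp add: avd_def)
next
  case False thus ?thesis unfolding avd_def by (simp only: if_False)
qed

lemma gap: "real (max_deg n x) - real (deg n x (avd n t x)) \<ge> real L - real T - 2"
  using max_ge deg_t avd_t by simp

end


lemma Ev_unique_aux:
  assumes ag: "t \<in> agents n" "a \<in> agents n" "b \<in> agents n" "a < b" "a \<noteq> t" "b \<noteq> t"
      and ag': "a' \<in> agents n" "b' \<in> agents n" "a' < b'" "a' \<noteq> t" "b' \<noteq> t"
      and L5: "L \<ge> 5" "L' \<ge> 5" and LL: "L \<le> L'"
      and x: "x \<in> Ev n t a b L T" "x \<in> Ev n t a' b' L' T"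
  shows "a = a' \<and> b = b' \<and> L = L'"
proof -
  have ab: "a \<noteq> b" "a' \<noteq> b'" using ag ag' by auto
  have "a' \<in> {a,b}"
  proof (rule ccontr)
    assume "a' \<notin> {a,b}"
    hence "a' \<in> R n t a b" using ag' by (auto simp: R_def)
    from deg_k[OF ag(1-3) ab(1) ag(5,6) L5(1) x(1) this] deg_a[OF ag(1) ag'(1,2) ab(2) ag'(4,5) L5(2) x(2)] LL
    show False by simp
  qed
  moreover have "b' \<in> {a,b}"
  proof (rule ccontr)
    assume "b' \<notin> {a,b}"
    hence "b' \<in> R n t a b" using ag' by (auto simp: R_def)
    from deg_k[OF ag(1-3) ab(1) ag(5,6) L5(1) x(1) this] deg_b[OF ag(1) ag'(1,2) ab(2) ag'(4,5) L5(2) x(2)] LL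
    show False by simp
  qed
  ultimately have eq: "a = a'" "b = b'" using ag ag' by auto
  show ?thesis using eq ia[OF ag(1-3) ab(1) ag(5,6) L5(1) x(1)] ia[OF ag(1) ag'(1,2) ab(2) ag'(4,5) L5(2) x(2)]
    by simp
qed

lemma Ev_unique:
  assumes ag: "t \<in> agents n" "a \<in> agents n" "b \<in> agents n" "a < b" "a \<noteq> t" "b \<noteq> t"
      and ag': "a' \<in> agents n" "b' \<in> agents n" "a' < b'" "a' \<noteq> t" "b' \<noteq> t"
      and L5: "L \<ge> 5" "L' \<ge> 5"
      and x: "x \<in> Ev n t a b L T" "x \<in> Ev n t a' b' L' T"
  shows "a = a' \<and> b = b' \<and> L = L'"
proof (cases "L \<le> L'")
  case True thus ?thesis using Ev_unique_aux[OF ag ag' L5 True x] by simp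
next
  case False thus ?thesis using Ev_unique_aux[OF ag(1) ag'(1-5) ag(2-6) L5(2,1) _ x(2,1)] by auto
qed

lemma prob_pair_product:
  "measure_pmf.prob (pair_pmf M N) (A \<times> B) = measure_pmf.prob M A * measure_pmf.prob N B"
proof -
  have "measure_pmf.prob (pair_pmf M N) (A \<times> B) = measure_pmf.prob (pair_pmf M N) ((A \<times> B) \<inter> set_pmf (pair_pmf M N))"
    by (rule measure_Int_set_pmf[symmetric])
  also have "(A \<times> B) \<inter> set_pmf (pair_pmf M N) = (A \<inter> set_pmf M) \<times> (B \<inter> set_pmf N)" by auto
  also have "measure_pmf.prob (pair_pmf M N) \<dots> = measure_pmf.prob M (A \<inter> set_pmf M) * measure_pmf.prob N (B \<inter> set_pmf N)"
    by (rule measure_pmf_prob_product) auto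
  finally show ?thesis by (simp add: measure_Int_set_pmf)
qed

lemma Pi_pmf_blocks:
  assumes "finite V" "finite S" "\<forall>v\<in>V. B v \<subseteq> S" "disjoint_family_on B V"
    "\<forall>v\<in>V. \<forall>f g. (\<forall>e\<in>B v. f e = g e) \<longrightarrow> P v f = P v g"
  shows "measure_pmf.prob (Pi_pmf S d q) {f. \<forall>v\<in>V. P v f} =
         (\<Prod>v\<in>V. measure_pmf.prob (Pi_pmf (B v) d q) {f. P v f})"
  using assms
proof (induction V arbitrary: S rule: finite_induct)
  case empty
  then show ?case by simp
next
  case (insert w V)
  have fB: "finite (B w)" using insert.prems finite_subset by auto
  have SU: "S = B w \<union> (S - B w)" using insert.prems by auto
  let ?mg = "\<lambda>(f,g) x. if x \<in> B w then f x else g x"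
  have PS: "Pi_pmf S d q = map_pmf ?mg (pair_pmf (Pi_pmf (B w) d q) (Pi_pmf (S - B w) d q))"
    using Pi_pmf_union[of "B w" "S - B w" d q] fB insert.prems SU by auto
  have disj: "\<forall>v\<in>V. B v \<subseteq> S - B w"
  proof
    fix v assume v: "v \<in> V"
    hence "v \<noteq> w" using insert.hyps by auto
    hence "B v \<inter> B w = {}" using insert.prems(3) v unfolding disjoint_family_on_def by auto
    thus "B v \<subseteq> S - B w" using insert.prems v by auto
  qed
  have loc1: "P w (?mg (f,g)) = P w f" for f g
    using insert.prems(4) by (intro insert.prems(4)[rule_format]) auto
  have loc2: "v \<in> V \<Longrightarrow> P v (?mg (f,g)) = P v g" for f g v
    using insert.prems(4) disj by (intro insert.prems(4)[rule_format]) auto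
  have pre: "?mg -` {f. \<forall>v\<in>insert w V. P v f} = {f. P w f} \<times> {g. \<forall>v\<in>V. P v g}"
  proof (rule set_eqI)
    fix z show "z \<in> ?mg -` {f. \<forall>v\<in>insert w V. P v f} \<longleftrightarrow> z \<in> {f. P w f} \<times> {g. \<forall>v\<in>V. P v g}"
      using loc1[of "fst z" "snd z"] loc2[of _ "fst z" "snd z"] by (cases z) auto
  qed
  have "measure_pmf.prob (Pi_pmf S d q) {f. \<forall>v\<in>insert w V. P v f} =
        measure_pmf.prob (Pi_pmf (B w) d q) {f. P w f} * measure_pmf.prob (Pi_pmf (S - B w) d q) {g. \<forall>v\<in>V. P v g}"
    unfolding PS measure_map_pmf pre by (rule prob_pair_product)
  also have "measure_pmf.prob (Pi_pmf (S - B w) d q) {g. \<forall>v\<in>V. P v g} = (\<Prod>v\<in>V. measure_pmf.prob (Pi_pmf (B v) d q) {f. P v f})"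
    using insert.prems disj
    by (intro insert.IH) (auto simp: disjoint_family_on_def)
  finally show ?case using insert.hyps by simp
qed

lemma block_binomial:
  fixes A :: "nat set" and v :: nat
  assumes "finite A" "p \<in> {0..1}"
  shows "measure_pmf.prob (Pi_pmf ((\<lambda>i. (i, v)) ` A) False (\<lambda>_. bernoulli_pmf p))
           {f. card {i \<in> A. f (i, v)} \<in> X} = measure_pmf.prob (binomial_pmf (card A) p) X"
proof -
  let ?B = "(\<lambda>i. (i, v)) ` A"
  have inj: "inj_on (\<lambda>i. (i, v)) A" by (auto simp: inj_on_def)
  have cB: "card ?B = card A" using card_image[OF inj] .
  have "binomial_pmf (card A) p = map_pmf (\<lambda>f. card {x\<in>?B. f x}) (Pi_pmf ?B False (\<lambda>_. bernoulli_pmf p))"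
    by (rule binomial_pmf_altdef') (use assms cB in auto)
  moreover have "card {x\<in>?B. f x} = card {i \<in> A. f (i, v)}" for f :: "nat \<times> nat \<Rightarrow> bool"
  proof -
    have "{x\<in>?B. f x} = (\<lambda>i. (i, v)) ` {i \<in> A. f (i, v)}" by auto
    thus ?thesis using inj by (simp add: card_image inj_on_subset)
  qed
  ultimately show ?thesis by (simp add: vimage_def)
qed

lemma prob_uniform_blocks:
  fixes Sr :: "nat \<Rightarrow> nat set"
  assumes p: "p \<in> {0..1}" and sub: "\<forall>v\<in>agents n. Sr v \<subseteq> agents n - {v}"
  shows "measure_pmf.prob (uniform_model n p) {x. \<forall>v\<in>agents n. indeg (Sr v) x v \<in> X v} =
         (\<Prod>v\<in>agents n. measure_pmf.prob (binomial_pmf (card (Sr v)) p) (X v))"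
proof -
  let ?S = "possible_edges n"
  let ?B = "\<lambda>v. (\<lambda>i. (i, v)) ` Sr v"
  have fS: "finite ?S" unfolding possible_edges_def
    by (rule finite_subset[of _ "agents n \<times> agents n"]) auto
  have "measure_pmf.prob (uniform_model n p) {x. \<forall>v\<in>agents n. indeg (Sr v) x v \<in> X v} =
        measure_pmf.prob (Pi_pmf ?S False (\<lambda>_. bernoulli_pmf p)) {f. \<forall>v\<in>agents n. card {i \<in> Sr v. f (i, v)} \<in> X v}"
    unfolding uniform_model_def measure_map_pmf by (simp add: indeg_def)
  also have "\<dots> = (\<Prod>v\<in>agents n. measure_pmf.prob (Pi_pmf (?B v) False (\<lambda>_. bernoulli_pmf p)) {f. card {i \<in> Sr v. f (i, v)} \<in> X v})"
  proof (rule Pi_pmf_blocks)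
    show "\<forall>v\<in>agents n. ?B v \<subseteq> ?S" using sub by (auto simp: possible_edges_def)
    show "disjoint_family_on ?B (agents n)" by (auto simp: disjoint_family_on_def)
    show "\<forall>v\<in>agents n. \<forall>f g. (\<forall>e\<in>?B v. f e = g e) \<longrightarrow> (card {i \<in> Sr v. f (i, v)} \<in> X v) = (card {i \<in> Sr v. g (i, v)} \<in> X v)"
    proof (intro ballI allI impI)
      fix v and f g :: "nat \<times> nat \<Rightarrow> bool" assume "\<forall>e\<in>?B v. f e = g e"
      hence "{i \<in> Sr v. f (i, v)} = {i \<in> Sr v. g (i, v)}" by auto
      thus "(card {i \<in> Sr v. f (i, v)} \<in> X v) = (card {i \<in> Sr v. g (i, v)} \<in> X v)" by simp
    qed
  qed (use fS in auto)
  also have "\<dots> = (\<Prod>v\<in>agents n. measure_pmf.prob (binomial_pmf (card (Sr v)) p) (X v))"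
  proof (rule prod.cong[OF refl])
    fix v assume "v \<in> agents n"
    hence "finite (Sr v)" using sub finite_subset[of "Sr v" "agents n"] by auto
    thus "measure_pmf.prob (Pi_pmf (?B v) False (\<lambda>_. bernoulli_pmf p)) {f. card {i \<in> Sr v. f (i, v)} \<in> X v} =
          measure_pmf.prob (binomial_pmf (card (Sr v)) p) (X v)"
      by (rule block_binomial[OF _ p])
  qed
  finally show ?thesis .
qed
lemma prob_Ev:
  assumes ag: "t \<in> agents n" "a \<in> agents n" "b \<in> agents n" "a \<noteq> b" "a \<noteq> t" "b \<noteq> t"
  shows "measure_pmf.prob (uniform_model n (1/2)) (Ev n t a b L T) =
     (measure_pmf.prob (binomial_pmf (n-2) (1/2)) {L})^2 * measure_pmf.prob (binomial_pmf (n-2) (1/2)) {..T}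
     * (measure_pmf.prob (binomial_pmf (n-2) (1/2)) {..L-5}) ^ (n-2)"
proof -
  let ?B = "binomial_pmf (n-2) (1/2)"
  have cS: "card (Src n t a b v) = n - 2" if "v \<in> agents n" for v
  proof (cases "v \<in> {a,b,t}")
    case True
    hence "card (Src n t a b v) = card (agents n - {a,b,t})" by (simp add: Src_def)
    also have "\<dots> = n - 2" using ag by (subst card_Diff_subset) (auto simp: card_insert_if)
    finally show ?thesis .
  next
    case False
    hence "card (Src n t a b v) = card (agents n - {a,b,v})" by (simp add: Src_def)
    also have "\<dots> = n - 2" using ag that False by (subst card_Diff_subset) (auto simp: card_insert_if)
    finally show ?thesis .
  qed
  have "measure_pmf.prob (uniform_model n (1/2)) (Ev n t a b L T) =
        (\<Prod>v\<in>agents n. measure_pmf.prob (binomial_pmf (card (Src n t a b v)) (1/2)) (Xs t a b L T v))"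
    unfolding Ev_def by (rule prob_uniform_blocks) (auto simp: Src_def)
  also have "\<dots> = (\<Prod>v\<in>agents n. measure_pmf.prob ?B (Xs t a b L T v))"
    by (rule prod.cong) (auto simp: cS)
  also have "agents n = insert a (insert b (insert t (R n t a b)))" using ag by (auto simp: R_def)
  also have "(\<Prod>v\<in>insert a (insert b (insert t (R n t a b))). measure_pmf.prob ?B (Xs t a b L T v)) =
     measure_pmf.prob ?B {L} * (measure_pmf.prob ?B {L} * (measure_pmf.prob ?B {..T} *
       (\<Prod>v\<in>R n t a b. measure_pmf.prob ?B (Xs t a b L T v))))"
    using ag by (simp add: R_def Xs_def)
  also have "(\<Prod>v\<in>R n t a b. measure_pmf.prob ?B (Xs t a b L T v)) = (\<Prod>v\<in>R n t a b. measure_pmf.prob ?B {..L-5})"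
    by (rule prod.cong) (auto simp: R_def Xs_def)
  also have "\<dots> = measure_pmf.prob ?B {..L-5} ^ (n-2)"
  proof -
    have "card (R n t a b) = n - 2" using ag unfolding R_def by (subst card_Diff_subset) (auto simp: card_insert_if)
    thus ?thesis by simp
  qed
  finally show ?thesis by (simp add: power2_eq_square)
qed

lemma avd_beats_asym: "avd_beats n t x k j \<Longrightarrow> \<not> avd_beats n t x j k"
  unfolding avd_beats_def by (auto simp: insert_commute split: if_splits)

lemma avd_in_agents:
  assumes "t \<in> agents n" shows "avd n t x \<in> agents n"
proof (cases "\<exists>k \<in> agents n. \<forall>j \<in> agents n - {k}. avd_beats n t x k j")
  case True
  then obtain k where k: "k \<in> agents n" "\<forall>j \<in> agents n - {k}. avd_beats n t x k j" by blast
  have uniq: "k' = k" if "k' \<in> agents n" "\<forall>j \<in> agents n - {k'}. avd_beats n t x k' j" for k'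
  proof (rule ccontr)
    assume "k' \<noteq> k"
    hence "avd_beats n t x k' k" "avd_beats n t x k k'" using that k by auto
    thus False using avd_beats_asym by blast
  qed
  have "(THE k. k \<in> agents n \<and> (\<forall>j \<in> agents n - {k}. avd_beats n t x k j)) = k"
    by (rule the_equality) (use k uniq in blast)+
  thus ?thesis using True k by (simp add: avd_def)
next
  case False thus ?thesis using assms unfolding avd_def by (simp only: if_False)
qed

lemma G_nonneg:
  assumes "t \<in> agents n"
  shows "real (max_deg n x) - real (deg n x (avd n t x)) \<ge> 0"
proof -
  have "deg n x (avd n t x) \<le> max_deg n x" unfolding max_deg_def
    using avd_in_agents[OF assms] by (intro Max_ge) auto
  thus ?thesis by simp
qed

definition Pairs :: "nat \<Rightarrow> nat \<Rightarrow> (nat \<times> nat) set" where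
  "Pairs n t = {(a,b). a \<in> agents n - {t} \<and> b \<in> agents n - {t} \<and> a < b}"

lemma finite_Pairs: "finite (Pairs n t)"
  unfolding Pairs_def by (rule finite_subset[of _ "agents n \<times> agents n"]) auto

lemma card_Pairs:
  assumes "t \<in> agents n"
  shows "real n * (real n - 1) \<le> 2 * real (card (Pairs n t))"
proof -
  let ?A = "agents n - {t}"
  have cA: "card ?A = n" using assms by simp
  have "?A \<times> ?A - Id_on ?A \<subseteq> Pairs n t \<union> prod.swap ` Pairs n t"
    by (auto simp: Pairs_def image_iff Id_on_def)
  hence "card (?A \<times> ?A - Id_on ?A) \<le> card (Pairs n t \<union> prod.swap ` Pairs n t)"
    by (intro card_mono) (auto intro: finite_Pairs)
  also have "\<dots> \<le> card (Pairs n t) + card (prod.swap ` Pairs n t)" by (rule card_Un_le)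
  also have "card (prod.swap ` Pairs n t) \<le> card (Pairs n t)" by (rule card_image_le[OF finite_Pairs])
  finally have 1: "card (?A \<times> ?A - Id_on ?A) \<le> 2 * card (Pairs n t)" by simp
  have "card (?A \<times> ?A - Id_on ?A) = n * n - n"
  proof -
    have "Id_on ?A \<subseteq> ?A \<times> ?A" by auto
    moreover have "card (Id_on ?A) = n"
    proof -
      have "Id_on ?A = (\<lambda>a. (a,a)) ` ?A" by (auto simp: Id_on_def)
      thus ?thesis using cA by (simp add: card_image inj_on_def)
    qed
    moreover have "finite (Id_on ?A)" by (rule finite_subset[of _ "?A \<times> ?A"]) auto
    ultimately show ?thesis using cA by (simp add: card_Diff_subset card_cartesian_product)
  qed
  with 1 have "n * n - n \<le> 2 * card (Pairs n t)" by simp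
  hence "real (n * n - n) \<le> real (2 * card (Pairs n t))" by linarith
  moreover have "real (n * n - n) = real n * (real n - 1)"
    by (cases n) (auto simp: algebra_simps of_nat_diff)
  ultimately show ?thesis by simp
qed

lemma finite_set_uniform: "finite (set_pmf (uniform_model n p))"
proof -
  have fS: "finite (possible_edges n)" unfolding possible_edges_def
    by (rule finite_subset[of _ "agents n \<times> agents n"]) auto
  show ?thesis unfolding uniform_model_def using fS
    by (auto simp: set_Pi_pmf intro!: finite_PiE_dflt)
qed

lemma expect_lower:
  assumes t: "t \<in> agents n" and W: "finite W" "\<forall>L\<in>W. L \<ge> 5"
  shows "measure_pmf.expectation (uniform_model n (1/2))
             (\<lambda>x. real (max_deg n x) - real (deg n x (avd n t x)))
         \<ge> (\<Sum>ab\<in>Pairs n t. \<Sum>L\<in>W. (real L - real T - 2) *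
               measure_pmf.prob (uniform_model n (1/2)) (Ev n t (fst ab) (snd ab) L T))"
proof -
  let ?M = "uniform_model n (1/2)"
  let ?G = "\<lambda>x. real (max_deg n x) - real (deg n x (avd n t x))"
  let ?I = "Pairs n t \<times> W"
  let ?g = "\<lambda>i::(nat\<times>nat)\<times>nat. real (snd i) - real T - 2"
  let ?E = "\<lambda>i::(nat\<times>nat)\<times>nat. Ev n t (fst (fst i)) (snd (fst i)) (snd i) T"
  have fI: "finite ?I" using finite_Pairs W by auto
  have pw: "(\<Sum>i\<in>?I. ?g i * indicator (?E i) x) \<le> ?G x" for x
  proof (cases "\<exists>i\<in>?I. x \<in> ?E i")
    case True
    then obtain i0 where i0: "i0 \<in> ?I" "x \<in> ?E i0" by blast
    obtain a b L where i0d: "i0 = ((a,b),L)" by (metis prod.exhaust)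
    have ab: "a \<in> agents n" "b \<in> agents n" "a < b" "a \<noteq> t" "b \<noteq> t" "L \<ge> 5"
      using i0 i0d W by (auto simp: Pairs_def)
    have others: "i = i0" if "i \<in> ?I" "x \<in> ?E i" for i
    proof -
      obtain a' b' L' where id: "i = ((a',b'),L')" by (metis prod.exhaust)
      have ab': "a' \<in> agents n" "b' \<in> agents n" "a' < b'" "a' \<noteq> t" "b' \<noteq> t" "L' \<ge> 5"
        using that id W by (auto simp: Pairs_def)
      have "a = a' \<and> b = b' \<and> L = L'"
        by (rule Ev_unique[OF t ab(1-5) ab'(1-5) ab(6) ab'(6)]) (use i0 i0d that id in auto)
      thus ?thesis using id i0d by simp
    qed
    have "(\<Sum>i\<in>?I. ?g i * indicator (?E i) x) = ?g i0 * indicator (?E i0) x"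
    proof (rule sum.remove[OF fI i0(1), THEN trans])
      have "(\<Sum>i\<in>?I - {i0}. ?g i * indicator (?E i) x) = 0"
      proof (rule sum.neutral, rule ballI)
        fix i assume "i \<in> ?I - {i0}"
        hence "x \<notin> ?E i" using others by blast
        thus "?g i * indicator (?E i) x = 0" by simp
      qed
      thus "?g i0 * indicator (?E i0) x + (\<Sum>i\<in>?I - {i0}. ?g i * indicator (?E i) x) = ?g i0 * indicator (?E i0) x" by simp
    qed
    also have "\<dots> = real L - real T - 2" using i0 i0d by simp
    also have "\<dots> \<le> ?G x"
      by (rule gap[OF t ab(1,2) _ ab(4,5) ab(6)]) (use i0 i0d ab in auto)
    finally show ?thesis .
  next
    case False
    hence "(\<Sum>i\<in>?I. ?g i * indicator (?E i) x) = 0" by (auto intro!: sum.neutral)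
    thus ?thesis using G_nonneg[OF t] by simp
  qed
  have int: "integrable ?M f" for f :: "(nat\<times>nat) set \<Rightarrow> real"
    by (rule integrable_measure_pmf_finite[OF finite_set_uniform])
  have "measure_pmf.expectation ?M (\<lambda>x. \<Sum>i\<in>?I. ?g i * indicator (?E i) x) \<le> measure_pmf.expectation ?M ?G"
    by (rule integral_mono[OF int int pw])
  also have "measure_pmf.expectation ?M (\<lambda>x. \<Sum>i\<in>?I. ?g i * indicator (?E i) x) =
             (\<Sum>i\<in>?I. ?g i * measure_pmf.prob ?M (?E i))"
    by (subst Bochner_Integration.integral_sum) (auto intro: int)
  also have "\<dots> = (\<Sum>ab\<in>Pairs n t. \<Sum>L\<in>W. (real L - real T - 2) *
               measure_pmf.prob (uniform_model n (1/2)) (Ev n t (fst ab) (snd ab) L T))"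
    by (subst sum.cartesian_product) (simp add: case_prod_unfold)
  finally show ?thesis .
qed

definition pb :: "nat \<Rightarrow> nat \<Rightarrow> real" where "pb m j = real (m choose j) / 2^m"
definition Qt :: "nat \<Rightarrow> nat \<Rightarrow> real" where "Qt m j = (\<Sum>i\<in>{j..m}. pb m i)"

lemma pb_nonneg: "pb m j \<ge> 0" by (simp add: pb_def)
lemma pb_zero: "j > m \<Longrightarrow> pb m j = 0" by (simp add: pb_def)

lemma pb_ratio:
  assumes "j < m"
  shows "pb m (Suc j) = pb m j * (real m - real j) / (real j + 1)"
proof -
  obtain m' where m: "m = Suc m'" using assms by (cases m) auto
  have 1: "(m - j) * (m choose j) = m * (m' choose j)" using binomial_absorb_comp[of m j] m by simp
  have 2: "Suc j * (m choose Suc j) = m * (m' choose j)" using Suc_times_binomial[of j m'] m by simp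
  have "real (Suc j) * real (m choose Suc j) = real (m - j) * real (m choose j)"
    using 1 2 by (metis of_nat_mult)
  hence "(real j + 1) * real (m choose Suc j) = (real m - real j) * real (m choose j)"
    using assms by (simp add: of_nat_diff add.commute)
  hence "real (m choose Suc j) = (real m - real j) * real (m choose j) / (real j + 1)"
    by (simp add: field_simps)
  thus ?thesis unfolding pb_def by (simp add: mult_ac)
qed

lemma pb_sum: "(\<Sum>i\<le>m. pb m i) = 1"
proof -
  have "(\<Sum>i\<le>m. pb m i) = (\<Sum>i\<le>m. real (m choose i)) / 2^m" by (simp add: pb_def sum_divide_distrib)
  also have "(\<Sum>i\<le>m. real (m choose i)) = 2^m" using choose_row_sum[of m] by (metis of_nat_numeral of_nat_power of_nat_sum)
  finally show ?thesis by simp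
qed

lemma pb_center: "pb m (m div 2) \<ge> 1 / (real m + 1)"
proof -
  have "1 = (\<Sum>i\<le>m. pb m i)" using pb_sum by simp
  also have "\<dots> \<le> (\<Sum>i\<le>m. pb m (m div 2))"
    by (intro sum_mono) (simp add: pb_def divide_right_mono binomial_maximum)
  also have "\<dots> = (real m + 1) * pb m (m div 2)" by simp
  finally show ?thesis by (simp add: field_simps)
qed

lemma pb_lower:
  assumes "D \<le> L" "L \<le> m"
  shows "pb m L \<ge> pb m D * ((real m - real L) / (real L + 1)) ^ (L - D)"
  using assms
proof (induction L rule: dec_induct)
  case base thus ?case by simp
next
  case (step L)
  let ?r = "\<lambda>L. (real m - real L) / (real L + 1)"
  have r0: "?r (Suc L) \<ge> 0" using step by auto
  have rle: "?r (Suc L) \<le> ?r L" using step by (intro frac_le) auto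
  have "pb m D * ?r (Suc L) ^ (Suc L - D) = pb m D * ?r (Suc L) ^ (L - D) * ?r (Suc L)"
    using step by (simp add: Suc_diff_le)
  also have "\<dots> \<le> pb m D * ?r L ^ (L - D) * ?r L"
    using r0 rle pb_nonneg[of m D]
    by (intro mult_mono mult_left_mono power_mono) (auto simp: step)
  also have "\<dots> \<le> pb m L * ?r L"
    using step r0 rle by (intro mult_right_mono) auto
  also have "\<dots> = pb m (Suc L)" using pb_ratio[of L m] step by simp
  finally show ?case .
qed

lemma pb_upper:
  assumes "D \<le> m"
  shows "pb m (D + k) \<le> pb m D * ((real m - real D) / (real D + 1)) ^ k"
proof (induction k)
  case 0 then show ?case by simp
next
  case (Suc k)
  let ?r = "(real m - real D) / (real D + 1)"
  have r0: "?r \<ge> 0" using assms by auto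
  show ?case
  proof (cases "D + k < m")
    case True
    have "pb m (D + Suc k) = pb m (D + k) * ((real m - real (D + k)) / (real (D + k) + 1))"
      using pb_ratio[OF True] by simp
    also have "\<dots> \<le> pb m (D + k) * ?r"
      using pb_nonneg[of m "D+k"] True by (intro mult_left_mono frac_le) auto
    also have "\<dots> \<le> pb m D * ?r ^ k * ?r" by (intro mult_right_mono Suc.IH r0)
    finally show ?thesis by (simp only: power_Suc2 mult.assoc)
  next
    case False
    hence "pb m (D + Suc k) = 0" by (intro pb_zero) auto
    thus ?thesis using r0 pb_nonneg[of m D] by (metis mult_nonneg_nonneg zero_le_power)
  qed
qed

lemma Qt_tail:
  assumes "D \<le> m" "2 * D + 1 > m"
  shows "Qt m D \<le> pb m D * (real D + 1) / (2 * real D + 1 - real m)"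
proof -
  let ?r = "(real m - real D) / (real D + 1)"
  have r0: "?r \<ge> 0" and r1: "?r < 1" using assms by (auto simp: divide_simps)
  have "Qt m D = (\<Sum>k<Suc (m - D). pb m (D + k))"
    unfolding Qt_def
    by (rule sum.reindex_bij_witness[of _ "\<lambda>k. D + k" "\<lambda>i. i - D"]) (use assms in auto)
  also have "\<dots> \<le> (\<Sum>k<Suc (m - D). pb m D * ?r ^ k)"
    by (intro sum_mono pb_upper assms)
  also have "\<dots> = pb m D * (\<Sum>k<Suc (m - D). ?r ^ k)" by (rule sum_distrib_left[symmetric])
  also have "(\<Sum>k<Suc (m - D). ?r ^ k) = (1 - ?r ^ Suc (m - D)) / (1 - ?r)"
    using r1 by (subst sum_gp_strict) auto
  also have "\<dots> \<le> 1 / (1 - ?r)"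
  proof -
    have "?r ^ Suc (m - D) \<ge> 0" using r0 by (rule zero_le_power)
    thus ?thesis using r1 by (intro divide_right_mono) auto
  qed
  also have "1 - ?r = (2 * real D + 1 - real m) / (real D + 1)" by (simp add: field_simps)
  finally show ?thesis using pb_nonneg[of m D] by (simp add: mult_left_mono)
qed

lemma Qt_anti: "j \<le> j' \<Longrightarrow> Qt m j' \<le> Qt m j"
  unfolding Qt_def by (intro sum_mono2) (auto simp: pb_nonneg)

lemma pb_decr:
  assumes "2 * i + 1 \<ge> m" "i \<le> i'"
  shows "pb m i' \<le> pb m i"
proof (cases "i \<le> m")
  case True
  have "pb m (i + (i' - i)) \<le> pb m i * ((real m - real i) / (real i + 1)) ^ (i' - i)"
    by (rule pb_upper[OF True])
  also have "\<dots> \<le> pb m i * 1"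
    using assms True pb_nonneg[of m i] by (intro mult_left_mono power_le_one) (auto simp: divide_simps)
  finally show ?thesis using assms by simp
next
  case False thus ?thesis using assms by (simp add: pb_zero)
qed

lemma Qt_lower:
  assumes "j + h \<le> m" "2 * j + 1 \<ge> m"
  shows "Qt m j \<ge> real h * pb m (j + h)"
proof -
  have "real h * pb m (j + h) = (\<Sum>i\<in>{j..<j+h}. pb m (j + h))" by simp
  also have "\<dots> \<le> (\<Sum>i\<in>{j..<j+h}. pb m i)"
    by (intro sum_mono pb_decr) (use assms in auto)
  also have "\<dots> \<le> Qt m j" unfolding Qt_def by (intro sum_mono2) (use assms pb_nonneg in auto)
  finally show ?thesis .
qed

lemma pmf_half: "pmf (binomial_pmf m (1/2)) j = pb m j"
proof (cases "j \<le> m")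
  case True
  have "(1/2::real) ^ j * (1/2) ^ (m - j) = 1 / 2^m"
    using True by (simp add: power_add[symmetric] power_one_over)
  thus ?thesis by (simp add: pb_def mult.assoc)
next
  case False thus ?thesis by (simp add: pb_def binomial_eq_0)
qed

lemma prob_le_half: "measure_pmf.prob (binomial_pmf m (1/2)) {..j} = (\<Sum>i\<le>j. pb m i)"
  by (simp add: measure_measure_pmf_finite pmf_half)

lemma prob_single_half: "measure_pmf.prob (binomial_pmf m (1/2)) {j} = pb m j"
  by (simp add: measure_pmf_single pmf_half)

lemma F_ge_Q: "(\<Sum>i\<le>j. pb m i) \<ge> 1 - Qt m (Suc j)"
proof -
  have "1 = (\<Sum>i\<le>m. pb m i)" using pb_sum by simp
  also have "\<dots> \<le> (\<Sum>i\<in>{..j} \<union> {Suc j..m}. pb m i)" by (intro sum_mono2) (auto simp: pb_nonneg)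
  also have "\<dots> = (\<Sum>i\<le>j. pb m i) + Qt m (Suc j)" unfolding Qt_def by (rule sum.union_disjoint) auto
  finally show ?thesis by simp
qed

lemma Qt_hoeffding:
  assumes "m > 0" "\<epsilon> \<ge> 0" "real j \<ge> real m / 2 + \<epsilon>"
  shows "Qt m j \<le> exp (- 2 * \<epsilon>^2 / real m)"
proof -
  interpret binomial_distribution m "1/2" by unfold_locales auto
  have "Qt m j = measure_pmf.prob (binomial_pmf m (1/2)) {j..m}"
    unfolding Qt_def by (simp add: measure_measure_pmf_finite pmf_half)
  also have "\<dots> \<le> measure_pmf.prob (binomial_pmf m (1/2)) {x. real x \<ge> real m * (1/2) + \<epsilon>}"
    using assms by (intro measure_pmf.finite_measure_mono) auto
  also have "\<dots> \<le> exp (- 2 * \<epsilon>^2 / real m)" by (rule prob_ge[OF assms(1,2)])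
  finally show ?thesis .
qed

lemma pow_exp_lower:
  fixes x :: real and E :: nat
  assumes "0 \<le> x" "x \<le> 1/2" "real E \<le> B"
  shows "(1 - x) ^ E \<ge> exp (- 2 * x * B)"
proof -
  have pos: "1 - x > 0" using assms by simp
  have "ln (1 - x) \<ge> - x - 2 * x^2" by (rule ln_one_minus_pos_lower_bound) (use assms in auto)
  moreover have "2 * x^2 \<le> x"
  proof -
    have "x * (2 * x) \<le> x * 1" using assms by (intro mult_left_mono) auto
    thus ?thesis by (simp add: power2_eq_square mult_ac)
  qed
  ultimately have l: "ln (1 - x) \<ge> - 2 * x" by simp
  have "(1 - x) ^ E = exp (real E * ln (1 - x))" using pos by (simp add: exp_of_nat_mult exp_ln_iff)
  also have "real E * ln (1 - x) \<ge> real E * (- 2 * x)" using l by (intro mult_left_mono) auto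
  hence "exp (real E * ln (1 - x)) \<ge> exp (real E * (- 2 * x))" by simp
  moreover have "real E * (- 2 * x) \<ge> B * (- 2 * x)" using assms by (intro mult_right_mono_neg) auto
  hence "exp (real E * (- 2 * x)) \<ge> exp (- 2 * x * B)" by (simp add: mult_ac)
  ultimately show ?thesis by linarith
qed

lemma stepC:
  fixes m :: nat and t s :: real
  assumes M1: "m \<ge> 1" and t0: "t \<ge> 0" and s: "s = sqrt (real m)"
    and h1: "real m * s / (real m + 1) * exp (- 4 * (t + s + 1) * (2 * (t + s + 1) + 1) / real m) > 1/2"
    and h2: "real m / 2 + t + s + 1 \<le> real m"
    and h3: "4 * (2 * (t + s + 1) + 1) \<le> real m"
  shows "real m * Qt m (m div 2 + nat \<lfloor>t\<rfloor>) > 1/2"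
proof -
  define M where "M = real m"
  have M1': "M \<ge> 1" using M1 by (simp add: M_def)
  have s1: "s \<ge> 1" using M1' s by (simp add: M_def)
  define h where "h = nat \<lceil>s\<rceil>"
  define j1 where "j1 = m div 2 + nat \<lfloor>t\<rfloor>"
  define E where "E = nat \<lfloor>t\<rfloor> + h"
  define L where "L = j1 + h"
  have hs: "real h \<ge> s" "real h \<le> s + 1" using s1 by (auto simp: h_def)
  have ft: "real (nat \<lfloor>t\<rfloor>) \<le> t" using t0 by simp
  have EB: "real E \<le> t + s + 1" using hs ft by (simp add: E_def)
  have md: "2 * real (m div 2) \<le> M" "2 * real (m div 2) \<ge> M - 1" unfolding M_def by linarith+
  have Lm: "L \<le> m"
  proof -
    have "real L \<le> M / 2 + t + s + 1" using md hs ft by (simp add: L_def j1_def)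
    thus ?thesis using h2 unfolding M_def by linarith
  qed
  have LE: "L - m div 2 = E" by (simp add: L_def j1_def E_def)
  have Qlow: "Qt m j1 \<ge> real h * pb m L"
    unfolding L_def by (rule Qt_lower) (use Lm md in \<open>auto simp: L_def j1_def M_def\<close>)
  have pbL: "pb m L \<ge> pb m (m div 2) * ((M - real L) / (real L + 1)) ^ E"
    using pb_lower[of "m div 2" L m] Lm LE by (simp add: L_def j1_def M_def)
  define x0 where "x0 = 2 * (2 * (t + s + 1) + 1) / M"
  have x0: "x0 \<ge> 0" "x0 \<le> 1/2" using h3 t0 s1 M1' by (auto simp: x0_def M_def divide_simps)
  have rlow: "(M - real L) / (real L + 1) \<ge> 1 - x0"
  proof -
    have L2: "2 * (real L + 1) \<ge> M" using md by (simp add: L_def j1_def)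
    have "x0 * (real L + 1) \<ge> x0 * (M / 2)" using L2 x0 by (intro mult_left_mono) auto
    also have "x0 * (M / 2) = 2 * (t + s + 1) + 1" using M1' by (simp add: x0_def)
    finally have "x0 * (real L + 1) \<ge> 2 * real E + 1" using EB by (smt (verit))
    moreover have "2 * real L \<le> M + 2 * real E" using md by (simp add: L_def j1_def E_def)
    ultimately have "(1 - x0) * (real L + 1) \<le> M - real L" by (simp add: algebra_simps)
    thus ?thesis by (simp add: field_simps)
  qed
  have "((M - real L) / (real L + 1)) ^ E \<ge> (1 - x0) ^ E"
    using rlow x0 by (intro power_mono) auto
  moreover have "(1 - x0) ^ E \<ge> exp (- 2 * x0 * (t + s + 1))"
    by (rule pow_exp_lower) (use x0 EB in auto)
  moreover have "- 2 * x0 * (t + s + 1) = - 4 * (t + s + 1) * (2 * (t + s + 1) + 1) / M"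
    unfolding x0_def by (simp add: field_simps)
  ultimately have rE: "((M - real L) / (real L + 1)) ^ E \<ge> exp (- 4 * (t + s + 1) * (2 * (t + s + 1) + 1) / M)"
    by (metis order.trans)
  define ex where "ex = exp (- 4 * (t + s + 1) * (2 * (t + s + 1) + 1) / M)"
  have ex0: "ex \<ge> 0" by (simp add: ex_def)
  have c: "pb m (m div 2) \<ge> 1 / (M + 1)" using pb_center[of m] by (simp add: M_def)
  have "pb m L \<ge> 1 / (M + 1) * ex"
  proof -
    have "1 / (M + 1) * ex \<le> pb m (m div 2) * ((M - real L) / (real L + 1)) ^ E"
      using c rE ex0 pb_nonneg[of m "m div 2"] by (intro mult_mono) (auto simp: ex_def M1')
    thus ?thesis using pbL by linarith
  qed
  hence "s * pb m L \<ge> s * (1 / (M + 1) * ex)" using s1 by (intro mult_left_mono) auto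
  moreover have "real h * pb m L \<ge> s * pb m L" by (intro mult_right_mono) (use hs pb_nonneg in auto)
  ultimately have "Qt m j1 \<ge> s * (1 / (M + 1) * ex)" using Qlow by linarith
  hence "M * Qt m j1 \<ge> M * (s * (1 / (M + 1) * ex))" using M1' by (intro mult_left_mono) auto
  moreover have "M * (s * (1 / (M + 1) * ex)) > 1/2" using h1 by (simp add: ex_def M_def)
  ultimately have "M * Qt m j1 > 1/2" by linarith
  thus ?thesis by (simp add: M_def j1_def)
qed

lemma key_fixed:
  fixes m :: nat and t s u :: real
  assumes M1: "m \<ge> 1" and tdef: "t = sqrt (real m * ln (real m)) / 8" and s: "s = sqrt (real m)"
    and udef: "u = sqrt (real m * ln (2 * real m) / 2)"
    and h1: "real m * s / (real m + 1) * exp (- 4 * (t + s + 1) * (2 * (t + s + 1) + 1) / real m) > 1/2"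
    and h2: "real m / 2 + t + s + 1 \<le> real m"
    and h3: "4 * (2 * (t + s + 1) + 1) \<le> real m"
    and h6: "real m / 2 + u + 4 + real m / 64 \<le> real m"
    and h5: "t \<ge> 3"
    and h7: "real m / (64 * (t - 1/2)) + 4 \<le> t - 1"
    and h8: "64 * (u + 1) \<le> 3 * real m / 4"
    and h9: "t - 3/2 \<ge> 2 * s"
    and h10: "real m / (64 * (u + 1)) \<ge> 2"
  shows "\<exists>W. finite W \<and> (\<forall>L\<in>W. L \<ge> 5) \<and>
     (\<Sum>L\<in>W. (real L - real (nat \<lfloor>real m / 2 + s\<rfloor>) - 2) * (pb m L)^2 * (\<Sum>i\<le>L-5. pb m i) ^ m)
        \<ge> ln (real m) / (2^22 * (real m)^2)"
proof -
  define M where "M = real m"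
  have M1': "M \<ge> 1" using M1 by (simp add: M_def)
  have s1: "s \<ge> 1" using M1' s by (simp add: M_def)
  have lnM: "ln M \<ge> 0" using M1' by simp
  have u2: "u^2 = M * ln (2 * M) / 2" using M1' unfolding udef M_def
    by (simp add: real_sqrt_pow2 ln_ge_zero)
  have u0: "u \<ge> 0" unfolding udef using M1' by (simp add: M_def)
  have t2: "t^2 = M * ln M / 64" unfolding tdef M_def using M1' lnM
    by (simp add: power_divide real_sqrt_pow2 M_def)
  define j1 where "j1 = m div 2 + nat \<lfloor>t\<rfloor>"
  have C: "M * Qt m j1 > 1/2" unfolding M_def j1_def
    by (rule stepC[OF M1 _ s h1 h2 h3]) (use h5 in auto)
  define j2 where "j2 = nat \<lceil>M / 2 + u\<rceil>"
  have j2r: "real j2 \<ge> M / 2 + u" "real j2 \<le> M / 2 + u + 1" using u0 M1' by (auto simp: j2_def)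
  have H: "M * Qt m j2 \<le> 1/2"
  proof -
    have "Qt m j2 \<le> exp (- 2 * u^2 / M)"
      unfolding M_def by (rule Qt_hoeffding) (use M1 u0 j2r in \<open>auto simp: M_def\<close>)
    also have "- 2 * u^2 / M = - ln (2 * M)" using u2 M1' by (simp add: field_simps)
    also have "exp (- ln (2 * M)) = 1 / (2 * M)" using M1' by (simp add: exp_minus inverse_eq_divide)
    finally show ?thesis using M1' by (simp add: field_simps)
  qed
  define js where "js = (LEAST j. M * Qt m j \<le> 1/2)"
  have js: "M * Qt m js \<le> 1/2" unfolding js_def by (rule LeastI[of _ j2]) (rule H)
  have js2: "js \<le> j2" unfolding js_def by (rule Least_le) (rule H)
  have js1: "j1 < js"
  proof (rule ccontr)
    assume "\<not> j1 < js"
    hence "Qt m j1 \<le> Qt m js" by (intro Qt_anti) auto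
    hence "M * Qt m j1 \<le> M * Qt m js" using M1' by (intro mult_left_mono) auto
    thus False using C js by linarith
  qed
  define D where "D = js - 1"
  have DjS: "Suc D = js" using js1 by (simp add: D_def)
  have QD: "M * Qt m D > 1/2"
  proof -
    have "D < js" using DjS by simp
    hence "\<not> M * Qt m D \<le> 1/2" unfolding js_def by (rule not_less_Least)
    thus ?thesis by simp
  qed
  define sg where "sg = real D - M / 2"
  have md: "2 * real (m div 2) \<le> M" "2 * real (m div 2) \<ge> M - 1" unfolding M_def by linarith+
  have sig_lo: "sg \<ge> t - 3/2"
  proof -
    have "real D \<ge> real j1" using js1 DjS by simp
    moreover have "real (nat \<lfloor>t\<rfloor>) \<ge> t - 1" using h5 by linarith
    ultimately show ?thesis using md by (simp add: sg_def j1_def)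
  qed
  have sig_hi: "sg \<le> u"
  proof -
    have "real D + 1 \<le> real j2" using js2 DjS by simp
    thus ?thesis using j2r by (simp add: sg_def)
  qed
  have sig1: "sg \<ge> 3/2" using sig_lo h5 by linarith
  have Dm: "D \<le> m" using sig_hi h6 unfolding sg_def M_def by linarith
  have D2: "2 * D + 1 > m" using sig1 unfolding sg_def M_def by linarith
  have pbD: "pb m D \<ge> sg / (M * (M + 1))"
  proof -
    have tail: "Qt m D \<le> pb m D * (real D + 1) / (2 * real D + 1 - real m)" by (rule Qt_tail[OF Dm D2])
    have pos: "2 * real D + 1 - M > 0" "real D + 1 > 0" using D2 by (auto simp: M_def)
    have "1 / (2 * M) < Qt m D" using QD M1' by (simp add: field_simps)
    also have "\<dots> \<le> pb m D * (real D + 1) / (2 * real D + 1 - M)" using tail by (simp add: M_def)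
    finally have "1 / (2 * M) * (2 * real D + 1 - M) < pb m D * (real D + 1)"
      using pos by (simp add: less_divide_eq)
    hence "1 / (2 * M) * (2 * real D + 1 - M) / (real D + 1) < pb m D * (real D + 1) / (real D + 1)"
      using pos by (intro divide_strict_right_mono) auto
    hence "1 / (2 * M) * (2 * real D + 1 - M) / (real D + 1) < pb m D"
      using pos by simp
    moreover have "sg / (M * (M + 1)) \<le> 1 / (2 * M) * (2 * real D + 1 - M) / (real D + 1)"
    proof -
      have "2 * real D + 1 - M = 2 * sg + 1" by (simp add: sg_def)
      moreover have "real D + 1 \<le> M + 1" using Dm by (simp add: M_def)
      ultimately have "(2 * sg + 1) / (M + 1) \<le> (2 * real D + 1 - M) / (real D + 1)"
        using pos sig1 by (intro frac_le) auto
      moreover have "2 * sg / (M + 1) \<le> (2 * sg + 1) / (M + 1)" using M1' by (intro divide_right_mono) auto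
      ultimately have "2 * sg / (M + 1) \<le> (2 * real D + 1 - M) / (real D + 1)" by linarith
      hence "1 / (2 * M) * (2 * sg / (M + 1)) \<le> 1 / (2 * M) * ((2 * real D + 1 - M) / (real D + 1))"
        using M1' by (intro mult_left_mono) auto
      thus ?thesis using M1' by (simp add: field_simps)
    qed
    ultimately show ?thesis by linarith
  qed
  define w where "w = nat \<lfloor>M / (64 * (sg + 1))\<rfloor>"
  define W where "W = {D+5..<D+5+w}"
  define T where "T = nat \<lfloor>M / 2 + s\<rfloor>"
  have Tr: "real T \<le> M / 2 + s" unfolding T_def using M1' s1 by simp
  have wp: "M / (64 * (sg + 1)) \<ge> 2"
  proof -
    have "M / (64 * (u + 1)) \<le> M / (64 * (sg + 1))"
      using sig_hi sig1 M1' by (intro divide_left_mono) auto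
    thus ?thesis using h10 by (simp add: M_def)
  qed
  have wr1: "real w \<le> M / (64 * (sg + 1))" unfolding w_def using wp by simp
  have wr2: "real w \<ge> M / (128 * (sg + 1))"
  proof -
    have "real w \<ge> M / (64 * (sg + 1)) - 1" unfolding w_def using wp by linarith
    have aux: "\<And>X w::real. X - 1 \<le> w \<Longrightarrow> 2 \<le> X \<Longrightarrow> X / 2 \<le> w" by linarith
    have "M / (64 * (sg + 1)) / 2 \<le> real w" by (rule aux) fact+
    thus ?thesis by simp
  qed
  have wk: "real w + 4 \<le> sg + 1/2"
  proof -
    have "M / (64 * (sg + 1)) \<le> M / (64 * (t - 1/2))"
      using sig_lo h5 M1' by (intro divide_left_mono) auto
    thus ?thesis using wr1 h7 sig_lo unfolding M_def by linarith
  qed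
  have wM: "real w \<le> M / 64"
  proof -
    have "M / (64 * (sg + 1)) \<le> M / 64" using sig1 M1' by (intro divide_left_mono) auto
    thus ?thesis using wr1 by linarith
  qed
  have Qjs: "Qt m js \<le> 1 / (2 * M)" using js M1' by (simp add: field_simps)
  define \<tau> where "\<tau> = sg^3 / (16 * M^2 * (M + 1)^2)"
  have termb: "(real L - real T - 2) * (pb m L)^2 * (\<Sum>i\<le>L-5. pb m i) ^ m \<ge> \<tau>" if L: "L \<in> W" for L
  proof -
    define k where "k = L - D"
    have k: "L = D + k" "k \<ge> 5" "real k \<le> real w + 4" using L by (auto simp: W_def k_def)
    have Lm: "L \<le> m"
    proof -
      have "real L \<le> M / 2 + u + 4 + M / 64" using k wM sig_hi by (simp add: sg_def)
      thus ?thesis using h6 unfolding M_def by linarith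
    qed
    define y where "y = 2 * (2 * sg + 2 * real k + 1) / M"
    have y0: "y \<ge> 0" using sig1 M1' by (simp add: y_def)
    have ky: "real k * y \<le> 1/2"
    proof -
      have a0: "real k \<le> sg + 1/2" using k(3) wk by linarith
      hence a1: "2 * real k \<le> 2 * sg + 1" by linarith
      have a: "2 * sg + 2 * real k + 1 \<le> 4 * (sg + 1)" using a1 by (simp add: algebra_simps)
      have "real k * (2 * sg + 2 * real k + 1) \<le> real k * (4 * (sg + 1))"
        using a by (intro mult_left_mono) auto
      also have "\<dots> \<le> (M / (64 * (sg + 1)) + 4) * (4 * (sg + 1))"
        using k wr1 sig1 by (intro mult_right_mono) auto
      also have "\<dots> = M / 16 + 16 * (sg + 1)" using sig1 by (simp add: field_simps)
      also have "\<dots> \<le> M / 4" using h8 sig_hi unfolding M_def by (simp only: ring_distribs mult_1_right)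
      finally have "real k * (2 * sg + 2 * real k + 1) \<le> M / 4" .
      thus ?thesis using M1' by (simp add: y_def field_simps)
    qed
    have y1: "y \<le> 1"
    proof -
      have "1 * y \<le> real k * y" using k y0 by (intro mult_right_mono) auto
      thus ?thesis using ky by linarith
    qed
    have rL: "(M - real L) / (real L + 1) \<ge> 1 - y"
    proof -
      have L2: "2 * (real L + 1) \<ge> M" using k sig1 by (simp add: sg_def)
      have "y * (real L + 1) \<ge> y * (M / 2)" using L2 y0 by (intro mult_left_mono) auto
      also have "y * (M / 2) = 2 * sg + 2 * real k + 1" using M1' by (simp add: y_def)
      finally have "y * (real L + 1) \<ge> 2 * sg + 2 * real k + 1" .
      moreover have "2 * sg + 2 * real k + 1 = 2 * real L + 1 - M" using k by (simp add: sg_def)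
      ultimately have "(1 - y) * (real L + 1) \<le> M - real L" by (simp add: algebra_simps)
      thus ?thesis by (simp add: field_simps)
    qed
    have "pb m L \<ge> pb m D * ((M - real L) / (real L + 1)) ^ (L - D)"
      using pb_lower[of D L m] k Lm by (simp add: M_def)
    moreover have "((M - real L) / (real L + 1)) ^ (L - D) \<ge> (1 - y) ^ k"
    proof -
      have e: "L - D = k" using k(1) by simp
      show ?thesis unfolding e using rL y1 by (intro power_mono) auto
    qed
    moreover have "(1 - y) ^ k \<ge> 1/2"
    proof -
      have "1 + real k * (- y) \<le> (1 + (- y)) ^ k" by (rule Bernoulli_inequality) (use y1 in auto)
      thus ?thesis using ky by simp
    qed
    ultimately have "pb m L \<ge> pb m D * (1/2)"
      using pb_nonneg[of m D] by (meson mult_left_mono order_trans)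
    hence pbL: "pb m L \<ge> pb m D / 2" by simp
    have e2: "sg / (2 * M * (M + 1)) = (sg / (M * (M + 1))) / 2" by simp
    have pbL2: "pb m L \<ge> sg / (2 * M * (M + 1))" unfolding e2
    proof -
      have aux: "\<And>a b d::real. a/2 \<le> d \<Longrightarrow> b \<le> a \<Longrightarrow> b/2 \<le> d" by linarith
      show "sg / (M * (M + 1)) / 2 \<le> pb m L" by (rule aux[OF pbL pbD])
    qed
    have F: "(\<Sum>i\<le>L-5. pb m i) ^ m \<ge> 1/2"
    proof -
      have "Suc (L - 5) \<ge> js" using k DjS by simp
      hence "Qt m (Suc (L - 5)) \<le> 1 / (2 * M)" using Qt_anti Qjs order.trans by blast
      hence F1: "(\<Sum>i\<le>L-5. pb m i) \<ge> 1 + (- 1 / (2 * M))" using F_ge_Q[of m "L-5"] by simp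
      have "(1 + (- 1 / (2 * M))) ^ m \<ge> 1 + real m * (- 1 / (2 * M))"
        by (rule Bernoulli_inequality) (use M1' in auto)
      also have "1 + real m * (- 1 / (2 * M)) = 1/2" using M1' by (simp add: M_def)
      finally have "(1 + (- 1 / (2 * M))) ^ m \<ge> 1/2" .
      moreover have "(1 + (- 1 / (2 * M))) ^ m \<le> (\<Sum>i\<le>L-5. pb m i) ^ m"
        using F1 M1' by (intro power_mono) auto
      ultimately show ?thesis by linarith
    qed
    have G: "real L - real T - 2 \<ge> sg / 2"
    proof -
      have "real L = real D + real k" using k(1) by simp
      moreover have "sg = real D - M / 2" by (simp add: sg_def)
      moreover have "real k \<ge> 5" using k(2) by simp
      ultimately show ?thesis using Tr h9 sig_lo by linarith
    qed
    have sp: "sg / (2 * M * (M + 1)) \<ge> 0" using sig1 M1' by simp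
    have "\<tau> = sg / 2 * (sg / (2 * M * (M + 1)))^2 * (1/2)"
      by (simp add: \<tau>_def power2_eq_square field_simps power3_eq_cube)
    also have "\<dots> \<le> (real L - real T - 2) * (pb m L)^2 * (\<Sum>i\<le>L-5. pb m i) ^ m"
      using G F pbL2 sp sig1 by (intro mult_mono power_mono) auto
    finally show ?thesis .
  qed
  have "ln M / (2^22 * M^2) \<le> real w * \<tau>"
  proof -
    have tau0: "\<tau> \<ge> 0" using sig1 by (simp add: \<tau>_def)
    have "M / (256 * sg) \<le> M / (128 * (sg + 1))" using sig1 M1' by (intro divide_left_mono) auto
    hence "M / (256 * sg) \<le> real w" using wr2 by linarith
    hence A: "M / (256 * sg) * \<tau> \<le> real w * \<tau>" using tau0 by (intro mult_right_mono)
    have B: "M / (256 * sg) * \<tau> = sg^2 / (4096 * M * (M+1)^2)"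
    proof -
      have nz: "M * sg \<noteq> 0" using sig1 M1' by simp
      have "M / (256 * sg) * \<tau> = (M * sg^3) / ((256 * sg) * (16 * M^2 * (M+1)^2))"
        by (simp add: \<tau>_def)
      also have "M * sg^3 = (sg^2) * (M * sg)" by (simp add: power2_eq_square power3_eq_cube)
      also have "(256 * sg) * (16 * M^2 * (M+1)^2) = (4096*M*(M+1)^2) * (M * sg)"
        by (simp add: power2_eq_square algebra_simps)
      also have "(sg^2 * (M * sg)) / ((4096*M*(M+1)^2) * (M * sg)) = sg^2 / (4096*M*(M+1)^2)"
        using nz by (rule mult_divide_mult_cancel_right)
      finally show ?thesis .
    qed
    have "sg \<ge> t / 2" using sig_lo h5 by linarith
    hence "sg^2 \<ge> (t/2)^2" using h5 by (intro power_mono) auto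
    hence C: "sg^2 \<ge> M * ln M / 256" using t2 by (simp add: power_divide)
    have "(M * ln M / 256) / (4096 * M * (M+1)^2) \<le> sg^2 / (4096 * M * (M+1)^2)"
      using C M1' by (intro divide_right_mono) auto
    moreover have "(M * ln M / 256) / (4096 * M * (M+1)^2) = ln M / (2^20 * (M+1)^2)"
      using M1' by (simp add: field_simps)
    moreover have "ln M / (2^22 * M^2) \<le> ln M / (2^20 * (M+1)^2)"
    proof -
      have "(M+1)^2 \<le> (2*M)^2" using M1' by (intro power_mono) auto
      hence "2^20 * (M+1)^2 \<le> 2^22 * M^2" by (simp add: power_mult_distrib)
      thus ?thesis using lnM M1' by (intro divide_left_mono) auto
    qed
    ultimately show ?thesis using A B by linarith
  qed
  also have "real w * \<tau> = (\<Sum>L\<in>W. \<tau>)" by (simp add: W_def)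
  also have "\<dots> \<le> (\<Sum>L\<in>W. (real L - real T - 2) * (pb m L)^2 * (\<Sum>i\<le>L-5. pb m i) ^ m)"
    by (rule sum_mono) (rule termb)
  finally have fin: "ln M / (2^22 * M^2) \<le> (\<Sum>L\<in>W. (real L - real T - 2) * (pb m L)^2 * (\<Sum>i\<le>L-5. pb m i) ^ m)" .
  show ?thesis
    by (rule exI[of _ W]) (use fin in \<open>auto simp: W_def T_def M_def\<close>)
qed

definition "tf (M::real) = sqrt (M * ln M) / 8"
definition "sf (M::real) = sqrt M"
definition "uf (M::real) = sqrt (M * ln (2 * M) / 2)"

lemma ev_real:
  "eventually (\<lambda>M::real. M \<ge> 1 \<and>
     M * sf M / (M + 1) * exp (- 4 * (tf M + sf M + 1) * (2 * (tf M + sf M + 1) + 1) / M) > 1/2 \<and>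
     M / 2 + tf M + sf M + 1 \<le> M \<and>
     4 * (2 * (tf M + sf M + 1) + 1) \<le> M \<and>
     M / 2 + uf M + 4 + M / 64 \<le> M \<and>
     tf M \<ge> 3 \<and>
     M / (64 * (tf M - 1/2)) + 4 \<le> tf M - 1 \<and>
     64 * (uf M + 1) \<le> 3 * M / 4 \<and>
     tf M - 3/2 \<ge> 2 * sf M \<and>
     M / (64 * (uf M + 1)) \<ge> 2 \<and>
     ln (M + 2) \<le> 2 * ln M) at_top"
  unfolding tf_def sf_def uf_def
  by (intro eventually_conj; real_asymp)

lemma ev_nat:
  "\<exists>m0. \<forall>m\<ge>m0. real m \<ge> 1 \<and>
     real m * sf (real m) / (real m + 1) * exp (- 4 * (tf (real m) + sf (real m) + 1) * (2 * (tf (real m) + sf (real m) + 1) + 1) / real m) > 1/2 \<and>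
     real m / 2 + tf (real m) + sf (real m) + 1 \<le> real m \<and>
     4 * (2 * (tf (real m) + sf (real m) + 1) + 1) \<le> real m \<and>
     real m / 2 + uf (real m) + 4 + real m / 64 \<le> real m \<and>
     tf (real m) \<ge> 3 \<and>
     real m / (64 * (tf (real m) - 1/2)) + 4 \<le> tf (real m) - 1 \<and>
     64 * (uf (real m) + 1) \<le> 3 * real m / 4 \<and>
     tf (real m) - 3/2 \<ge> 2 * sf (real m) \<and>
     real m / (64 * (uf (real m) + 1)) \<ge> 2 \<and>
     ln (real m + 2) \<le> 2 * ln (real m)"
proof -
  have "eventually (\<lambda>m::nat. real m \<ge> 1 \<and>
     real m * sf (real m) / (real m + 1) * exp (- 4 * (tf (real m) + sf (real m) + 1) * (2 * (tf (real m) + sf (real m) + 1) + 1) / real m) > 1/2 \<and>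
     real m / 2 + tf (real m) + sf (real m) + 1 \<le> real m \<and>
     4 * (2 * (tf (real m) + sf (real m) + 1) + 1) \<le> real m \<and>
     real m / 2 + uf (real m) + 4 + real m / 64 \<le> real m \<and>
     tf (real m) \<ge> 3 \<and>
     real m / (64 * (tf (real m) - 1/2)) + 4 \<le> tf (real m) - 1 \<and>
     64 * (uf (real m) + 1) \<le> 3 * real m / 4 \<and>
     tf (real m) - 3/2 \<ge> 2 * sf (real m) \<and>
     real m / (64 * (uf (real m) + 1)) \<ge> 2 \<and>
     ln (real m + 2) \<le> 2 * ln (real m)) sequentially"
    using filterlim_real_sequentially ev_real unfolding filterlim_iff by blast
  thus ?thesis unfolding eventually_sequentially by blast
qed


lemma FT_half:
  assumes "m \<ge> 1"
  shows "(\<Sum>i\<le>nat \<lfloor>real m / 2 + sqrt (real m)\<rfloor>. pb m i) \<ge> 1/2"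
proof -
  define T where "T = nat \<lfloor>real m / 2 + sqrt (real m)\<rfloor>"
  have "real (Suc T) \<ge> real m / 2 + sqrt (real m)" unfolding T_def by linarith
  hence "Qt m (Suc T) \<le> exp (- 2 * (sqrt (real m))^2 / real m)"
    using assms by (intro Qt_hoeffding) auto
  also have "- 2 * (sqrt (real m))^2 / real m = -2" using assms by simp
  also have "exp (-2::real) \<le> 1/2"
  proof -
    have "exp (2::real) \<ge> 1 + 2" by (rule exp_ge_add_one_self_aux) simp
    hence "exp (2::real) \<ge> 2" by simp
    thus ?thesis by (simp add: exp_minus inverse_eq_divide field_simps)
  qed
  finally show ?thesis using F_ge_Q[of m T] unfolding T_def by linarith
qed

theorem mainTheorem10:
  shows "\<exists>c > 0. \<exists>n0. \<forall>n \<ge> n0. \<forall>t \<in> agents n.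
           measure_pmf.expectation (uniform_model n (1/2))
             (\<lambda>x. real (max_deg n x) - real (deg n x (avd n t x))) \<ge> c * ln (real n)"
proof -
  obtain m0 where m0: "\<forall>m\<ge>m0. real m \<ge> 1 \<and>
     real m * sf (real m) / (real m + 1) * exp (- 4 * (tf (real m) + sf (real m) + 1) * (2 * (tf (real m) + sf (real m) + 1) + 1) / real m) > 1/2 \<and>
     real m / 2 + tf (real m) + sf (real m) + 1 \<le> real m \<and>
     4 * (2 * (tf (real m) + sf (real m) + 1) + 1) \<le> real m \<and>
     real m / 2 + uf (real m) + 4 + real m / 64 \<le> real m \<and>
     tf (real m) \<ge> 3 \<and>
     real m / (64 * (tf (real m) - 1/2)) + 4 \<le> tf (real m) - 1 \<and>
     64 * (uf (real m) + 1) \<le> 3 * real m / 4 \<and>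
     tf (real m) - 3/2 \<ge> 2 * sf (real m) \<and>
     real m / (64 * (uf (real m) + 1)) \<ge> 2 \<and>
     ln (real m + 2) \<le> 2 * ln (real m)"
    using ev_nat by blast
  have "\<forall>n \<ge> m0 + 2. \<forall>t \<in> agents n.
           measure_pmf.expectation (uniform_model n (1/2))
             (\<lambda>x. real (max_deg n x) - real (deg n x (avd n t x))) \<ge> (1 / 2^25) * ln (real n)"
  proof (intro allI impI ballI)
    fix n t assume n: "n \<ge> m0 + 2" and t: "t \<in> agents n"
    define m where "m = n - 2"
    have mm: "m \<ge> m0" "n = m + 2" using n by (auto simp: m_def)
    note hs = m0[rule_format, OF mm(1)]
    have m1: "m \<ge> 1" using hs by simp
    define M where "M = real m"
    obtain W where W: "finite W" "\<forall>L\<in>W. L \<ge> 5"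
      and S: "(\<Sum>L\<in>W. (real L - real (nat \<lfloor>real m / 2 + sf (real m)\<rfloor>) - 2) * (pb m L)^2 * (\<Sum>i\<le>L-5. pb m i) ^ m)
        \<ge> ln (real m) / (2^22 * (real m)^2)"
      using key_fixed[of m "tf (real m)" "sf (real m)" "uf (real m)"] hs m1
      unfolding tf_def sf_def uf_def by blast
    define T where "T = nat \<lfloor>real m / 2 + sf (real m)\<rfloor>"
    define S where "S = (\<Sum>L\<in>W. (real L - real T - 2) * (pb m L)^2 * (\<Sum>i\<le>L-5. pb m i) ^ m)"
    define FT where "FT = (\<Sum>i\<le>T. pb m i)"
    have FT: "FT \<ge> 1/2" using FT_half[OF m1] by (simp add: FT_def T_def sf_def)
    have S': "S \<ge> ln M / (2^22 * M^2)" using S by (simp add: S_def T_def M_def)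
    have lnM: "ln M \<ge> 0" using m1 by (simp add: M_def)
    have M1: "M \<ge> 1" using m1 by (simp add: M_def)
    have inner: "(\<Sum>L\<in>W. (real L - real T - 2) *
               measure_pmf.prob (uniform_model n (1/2)) (Ev n t (fst ab) (snd ab) L T)) = FT * S"
      if ab: "ab \<in> Pairs n t" for ab
    proof -
      have ag: "fst ab \<in> agents n" "snd ab \<in> agents n" "fst ab \<noteq> snd ab" "fst ab \<noteq> t" "snd ab \<noteq> t"
        using ab by (auto simp: Pairs_def)
      have "(\<Sum>L\<in>W. (real L - real T - 2) *
               measure_pmf.prob (uniform_model n (1/2)) (Ev n t (fst ab) (snd ab) L T)) =
            (\<Sum>L\<in>W. FT * ((real L - real T - 2) * (pb m L)^2 * (\<Sum>i\<le>L-5. pb m i) ^ m))"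
      proof (rule sum.cong[OF refl])
        fix L assume "L \<in> W"
        have "measure_pmf.prob (uniform_model n (1/2)) (Ev n t (fst ab) (snd ab) L T) =
              (pb m L)^2 * FT * (\<Sum>i\<le>L-5. pb m i) ^ m"
          using prob_Ev[OF t ag(1,2,3,4,5), of L T]
          by (simp add: prob_single_half prob_le_half FT_def m_def)
        thus "(real L - real T - 2) * measure_pmf.prob (uniform_model n (1/2)) (Ev n t (fst ab) (snd ab) L T) =
              FT * ((real L - real T - 2) * (pb m L)^2 * (\<Sum>i\<le>L-5. pb m i) ^ m)" by simp
      qed
      also have "\<dots> = FT * S" by (simp add: S_def sum_distrib_left)
      finally show ?thesis .
    qed
    have "measure_pmf.expectation (uniform_model n (1/2))
             (\<lambda>x. real (max_deg n x) - real (deg n x (avd n t x)))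
         \<ge> (\<Sum>ab\<in>Pairs n t. \<Sum>L\<in>W. (real L - real T - 2) *
               measure_pmf.prob (uniform_model n (1/2)) (Ev n t (fst ab) (snd ab) L T))"
      by (rule expect_lower[OF t W])
    also have "(\<Sum>ab\<in>Pairs n t. \<Sum>L\<in>W. (real L - real T - 2) *
               measure_pmf.prob (uniform_model n (1/2)) (Ev n t (fst ab) (snd ab) L T)) =
               real (card (Pairs n t)) * (FT * S)"
      using inner by simp
    finally have E1: "measure_pmf.expectation (uniform_model n (1/2))
             (\<lambda>x. real (max_deg n x) - real (deg n x (avd n t x))) \<ge> real (card (Pairs n t)) * (FT * S)" .
    have cP: "real (card (Pairs n t)) \<ge> M^2 / 2"
    proof -
      have "real n * (real n - 1) \<le> 2 * real (card (Pairs n t))" by (rule card_Pairs[OF t])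
      moreover have "M^2 \<le> real n * (real n - 1)" using mm M1
        by (simp add: M_def power2_eq_square algebra_simps)
      ultimately show ?thesis by linarith
    qed
    have S0: "ln M / (2^22 * M^2) \<ge> 0" using lnM by simp
    have "M^2 / 2 * (1/2 * (ln M / (2^22 * M^2))) \<le> real (card (Pairs n t)) * (FT * S)"
      using cP FT S' S0 M1 by (intro mult_mono) auto
    moreover have "M^2 / 2 * (1/2 * (ln M / (2^22 * M^2))) = ln M / 2^24"
      using M1 by (simp add: field_simps)
    moreover have "ln (real n) \<le> 2 * ln M" using hs mm by (simp add: M_def add.commute)
    ultimately show "measure_pmf.expectation (uniform_model n (1/2))
             (\<lambda>x. real (max_deg n x) - real (deg n x (avd n t x))) \<ge> (1 / 2^25) * ln (real n)"
      using E1 by simp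
  qed
  thus ?thesis by (intro exI[of _ "1 / 2^25"]) auto
qed

end
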